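(* Let $n\geq 2$ and let $X\subsetneq Z\subseteq[n]$ with $|Z|\geq |X|+2$. If $W\subseteq[n]$ satisfies $W\notin \mathcal{B}_{[\emptyset,X]}\cup\mathcal{B}_{[Z,[n]]}$, then there exists $W_0$ with $X\subsetneq W_0\subsetneq Z$ and $|W_0|=|X|+1$ such that $W_0$ and $W$ are incomparable.
   Context: $\mathcal{B}_{[X,Y]}=\{U: X\subseteq U\subseteq Y\}$ for subsets $X\subseteq Y$ of $[n]$. *)

theory Defs
  imports Main
begin

definition Bint :: "nat set \<Rightarrow> nat set \<Rightarrow> nat set set" where
  "Bint X Y = {U. X \<subseteq> U \<and> U \<subseteq> Y}"

end

theory Submission
  imports Defs
begin

theorem lemma2p4:
  fixes n :: nat and X Z W :: "nat set"
  assumes "n \<ge> 2"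
    and "X \<subset> Z" and "Z \<subseteq> {1..n}"
    and "card Z \<ge> card X + 2"
    and "W \<subseteq> {1..n}"
    and "W \<notin> Bint {} X \<union> Bint Z {1..n}"
  shows "\<exists>W0. X \<subset> W0 \<and> W0 \<subset> Z \<and> card W0 = card X + 1 \<and>
               \<not> W0 \<subseteq> W \<and> \<not> W \<subseteq> W0"
proof -
  have fZ: "finite Z" using assms(3) finite_subset by blast
  have fX: "finite X" using assms(2) fZ finite_subset by blast
  have nWX: "\<not> W \<subseteq> X" and nZW: "\<not> Z \<subseteq> W" using assms(5,6) by (auto simp: Bint_def)
  obtain w where w: "w \<in> W" "w \<notin> X" using nWX by blast
  have cD: "card (Z - X) \<ge> 2" proof -
    have "card (Z - X) = card Z - card X" using assms(2) fX by (intro card_Diff_subset) auto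
    then show ?thesis using assms(4) by linarith
  qed
  obtain a where a: "a \<in> Z" "a \<notin> X" "a \<noteq> w" "X \<subseteq> W \<longrightarrow> a \<notin> W"
  proof (cases "X \<subseteq> W")
    case True
    then obtain z where "z \<in> Z" "z \<notin> W" using nZW by blast
    then show ?thesis using True assms(2) w by (intro that) auto
  next
    case False
    have "Z - X - {w} \<noteq> {}"
    proof
      assume "Z - X - {w} = {}"
      then have "Z - X \<subseteq> {w}" by blast
      then have "card (Z - X) \<le> card {w}" by (intro card_mono) simp_all
      then have "card (Z - X) \<le> 1" by simp
      then show False using cD by simp
    qed
    then obtain b where "b \<in> Z" "b \<notin> X" "b \<noteq> w" by blast
    then show ?thesis using False by (intro that) auto
  qed
  define W0 where "W0 = insert a X"
  have c: "card W0 = card X + 1" using a fX by (simp add: W0_def)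
  have s: "W0 \<subseteq> Z" using a assms(2) by (auto simp: W0_def)
  have "W0 \<noteq> Z"
  proof
    assume "W0 = Z" then have "card Z = card X + 1" using c by simp
    then show False using assms(4) by linarith
  qed
  moreover have "\<not> W0 \<subseteq> W" using a w by (auto simp: W0_def)
  moreover have "\<not> W \<subseteq> W0" using a w by (auto simp: W0_def)
  moreover have "X \<subset> W0" using a by (auto simp: W0_def)
  ultimately show ?thesis using s c by blast
qed

end
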